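(* Let $\Omega\subset\mathbb{R}^d$, let $\Phi$ be such that $K(x,y)=\Phi(x-y)$ is a symmetric positive definite kernel on $\Omega$, let $x_1,\dots,x_n\in\Omega$ be distinct, $y_1,\dots,y_n\in\mathbb{R}$, $\lambda>0$, let $\Theta$ be a parameter set and $y^s:\Omega\times\Theta\to\mathbb{R}$. Write $\mathbf{\Phi}=(\Phi(x_i-x_j))_{ij}$, $Y=(y_1,\dots,y_n)^T$, $y^s(X;\theta)=(y^s(x_1,\theta),\dots,y^s(x_n,\theta))^T$, $\zeta^\theta_i=y_i-y^s(x_i,\theta)$, and $$\hat\zeta^\theta=\operatorname*{argmin}_{g\in\mathcal{N}_\Phi(\Omega)}\frac1n\sum_{i=1}^n(\zeta_i^\theta-g(x_i))^2+\lambda\|g\|^2_{\mathcal{N}_\Phi(\Omega)}.$$ Then $$\operatorname*{argmin}_{\theta\in\Theta}(Y-y^s(X;\theta))^T(\mathbf{\Phi}+n\lambda I_n)^{-1}(Y-y^s(X;\theta))=\operatorname*{argmin}_{\theta\in\Theta}\frac1n\sum_{i=1}^n(\zeta_i^\theta-\hat\zeta^\theta(x_i))^2+\lambda\|\hat\zeta^\theta\|^2_{\mathcal{N}_\Phi(\Omega)},$$ i.e. the maximum likelihood estimator $\hat\theta$ defined by the left-hand side is characterized by the right-hand side.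
   Context: $\mathcal{N}_\Phi(\Omega)$ is the reproducing kernel Hilbert space: the completion of $\{\sum_{i=1}^n\beta_i\Phi(\cdot-x_i):\beta_i\in\mathbb{R},x_i\in\Omega\}$ under $\langle\sum_i\beta_i\Phi(\cdot-x_i),\sum_j\gamma_j\Phi(\cdot-x'_j)\rangle=\sum_{i,j}\beta_i\gamma_j\Phi(x_i-x'_j)$. *)

theory Defs
  imports "HOL-Analysis.Analysis"
begin

text \<open>Elements of the pre-Hilbert space span of translates of Phi are represented by
  finitely supported coefficient functions c with support (the centres) inside Omega.\<close>

definition csupp :: "('a \<Rightarrow> real) \<Rightarrow> 'a set" where
  "csupp c = {z. c z \<noteq> 0}"

definition fs_coeff :: "'a set \<Rightarrow> ('a \<Rightarrow> real) \<Rightarrow> bool" where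
  "fs_coeff \<Omega> c \<longleftrightarrow> finite (csupp c) \<and> csupp c \<subseteq> \<Omega>"

definition kfun :: "('a::real_vector \<Rightarrow> real) \<Rightarrow> ('a \<Rightarrow> real) \<Rightarrow> 'a \<Rightarrow> real" where
  "kfun \<Phi> c = (\<lambda>x. \<Sum>z\<in>csupp c. c z * \<Phi> (x - z))"

definition knorm2 :: "('a::real_vector \<Rightarrow> real) \<Rightarrow> ('a \<Rightarrow> real) \<Rightarrow> real" where
  "knorm2 \<Phi> c = (\<Sum>z\<in>csupp c. \<Sum>w\<in>csupp c. c z * c w * \<Phi> (z - w))"

definition pd_kernel_on :: "'a::real_vector set \<Rightarrow> ('a \<Rightarrow> real) \<Rightarrow> bool" where
  "pd_kernel_on \<Omega> \<Phi> \<longleftrightarrow>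
     (\<forall>c. fs_coeff \<Omega> c \<and> csupp c \<noteq> {} \<longrightarrow> knorm2 \<Phi> c > 0)"

text \<open>s is a Cauchy sequence in the pre-Hilbert space whose pointwise limit on Omega is f
  (this realises the completion as a space of functions on Omega).\<close>
definition native_approx ::
  "'a::real_vector set \<Rightarrow> ('a \<Rightarrow> real) \<Rightarrow> ('a \<Rightarrow> real) \<Rightarrow> (nat \<Rightarrow> 'a \<Rightarrow> real) \<Rightarrow> bool" where
  "native_approx \<Omega> \<Phi> f s \<longleftrightarrow>
     (\<forall>k. fs_coeff \<Omega> (s k)) \<and>
     (\<forall>e>0. \<exists>N. \<forall>k\<ge>N. \<forall>m\<ge>N. knorm2 \<Phi> (s k - s m) < e) \<and>
     (\<forall>x\<in>\<Omega>. (\<lambda>k. kfun \<Phi> (s k) x) \<longlonglongrightarrow> f x)"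

definition native_space :: "'a::real_vector set \<Rightarrow> ('a \<Rightarrow> real) \<Rightarrow> ('a \<Rightarrow> real) set" where
  "native_space \<Omega> \<Phi> = {f. \<exists>s. native_approx \<Omega> \<Phi> f s}"

definition native_norm :: "'a::real_vector set \<Rightarrow> ('a \<Rightarrow> real) \<Rightarrow> ('a \<Rightarrow> real) \<Rightarrow> real" where
  "native_norm \<Omega> \<Phi> f =
     (SOME r. \<exists>s. native_approx \<Omega> \<Phi> f s \<and> (\<lambda>k. sqrt (knorm2 \<Phi> (s k))) \<longlonglongrightarrow> r)"

definition reg_obj ::
  "'a::real_vector set \<Rightarrow> ('a \<Rightarrow> real) \<Rightarrow> ('n::finite \<Rightarrow> 'a) \<Rightarrow> real \<Rightarrow> ('n \<Rightarrow> real)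
     \<Rightarrow> ('a \<Rightarrow> real) \<Rightarrow> real" where
  "reg_obj \<Omega> \<Phi> x lam z g =
     (1 / real CARD('n)) * (\<Sum>i\<in>UNIV. (z i - g (x i))^2) + lam * (native_norm \<Omega> \<Phi> g)^2"

definition reg_min ::
  "'a::real_vector set \<Rightarrow> ('a \<Rightarrow> real) \<Rightarrow> ('n::finite \<Rightarrow> 'a) \<Rightarrow> real \<Rightarrow> ('n \<Rightarrow> real)
     \<Rightarrow> ('a \<Rightarrow> real)" where
  "reg_min \<Omega> \<Phi> x lam z =
     (SOME g. g \<in> native_space \<Omega> \<Phi> \<and>
        (\<forall>h\<in>native_space \<Omega> \<Phi>. reg_obj \<Omega> \<Phi> x lam z g \<le> reg_obj \<Omega> \<Phi> x lam z h))"

definition argmins_on :: "'b set \<Rightarrow> ('b \<Rightarrow> real) \<Rightarrow> 'b set" where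
  "argmins_on \<Theta> F = {t\<in>\<Theta>. \<forall>t'\<in>\<Theta>. F t \<le> F t'}"

end

theory Submission
  imports Defs
begin

definition ip :: "('a::real_vector \<Rightarrow> real) \<Rightarrow> ('a \<Rightarrow> real) \<Rightarrow> ('a \<Rightarrow> real) \<Rightarrow> real" where
  "ip \<Phi> c d = (\<Sum>z\<in>csupp c. c z * kfun \<Phi> d z)"

lemma sum_csupp_ext:
  assumes "finite S" "csupp c \<subseteq> S"
  shows "(\<Sum>z\<in>csupp c. c z * f z) = (\<Sum>z\<in>S. c z * f z)"
  using assms by (intro sum.mono_neutral_left) (auto simp: csupp_def)

lemma kfun_ext:
  assumes "finite S" "csupp c \<subseteq> S"
  shows "kfun \<Phi> c x = (\<Sum>z\<in>S. c z * \<Phi> (x - z))"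
  unfolding kfun_def using sum_csupp_ext[OF assms] .

lemma ip_ext:
  assumes "finite S" "csupp c \<subseteq> S"
  shows "ip \<Phi> c d = (\<Sum>z\<in>S. c z * kfun \<Phi> d z)"
  unfolding ip_def using sum_csupp_ext[OF assms] .

lemma knorm2_ip: "knorm2 \<Phi> c = ip \<Phi> c c"
  unfolding knorm2_def ip_def kfun_def
  by (simp add: sum_distrib_left mult.assoc)

lemma csupp_add: "csupp (\<lambda>z. c z + d z) \<subseteq> csupp c \<union> csupp d"
  by (auto simp: csupp_def)
lemma csupp_diff: "csupp (c - d) \<subseteq> csupp c \<union> csupp d"
  by (auto simp: csupp_def)
lemma csupp_scale: "csupp (\<lambda>z. t * c z) \<subseteq> csupp c"
  by (auto simp: csupp_def)

lemma fs_add: "fs_coeff \<Omega> c \<Longrightarrow> fs_coeff \<Omega> d \<Longrightarrow> fs_coeff \<Omega> (\<lambda>z. c z + d z)"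
  unfolding fs_coeff_def using csupp_add[of c d] by (metis finite_Un finite_subset Un_least order_trans)
lemma fs_diff: "fs_coeff \<Omega> c \<Longrightarrow> fs_coeff \<Omega> d \<Longrightarrow> fs_coeff \<Omega> (c - d)"
  unfolding fs_coeff_def using csupp_diff[of c d] by (metis finite_Un finite_subset Un_least order_trans)
lemma fs_scale: "fs_coeff \<Omega> c \<Longrightarrow> fs_coeff \<Omega> (\<lambda>z. t * c z)"
  unfolding fs_coeff_def using csupp_scale[of t c] by (meson finite_subset order_trans)

lemma kfun_add: assumes "finite (csupp c)" "finite (csupp d)"
  shows "kfun \<Phi> (\<lambda>z. c z + d z) x = kfun \<Phi> c x + kfun \<Phi> d x"
proof -
  let ?S = "csupp c \<union> csupp d"
  have f: "finite ?S" using assms by auto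
  show ?thesis
    using kfun_ext[OF f csupp_add[of c d], of \<Phi> x] kfun_ext[OF f, of c \<Phi> x] kfun_ext[OF f, of d \<Phi> x]
    by (simp add: sum.distrib distrib_right)
qed

lemma kfun_diff: assumes "finite (csupp c)" "finite (csupp d)"
  shows "kfun \<Phi> (c - d) x = kfun \<Phi> c x - kfun \<Phi> d x"
proof -
  let ?S = "csupp c \<union> csupp d"
  have f: "finite ?S" using assms by auto
  show ?thesis
    using kfun_ext[OF f csupp_diff[of c d], of \<Phi> x] kfun_ext[OF f, of c \<Phi> x] kfun_ext[OF f, of d \<Phi> x]
    by (simp add: sum_subtractf left_diff_distrib)
qed

lemma kfun_scale: assumes "finite (csupp c)"
  shows "kfun \<Phi> (\<lambda>z. t * c z) x = t * kfun \<Phi> c x"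
  using kfun_ext[OF assms csupp_scale[of t c], of \<Phi> x] kfun_ext[OF assms, of c \<Phi> x]
  by (simp add: sum_distrib_left mult.assoc)

lemma ip_add_left: assumes "finite (csupp c)" "finite (csupp d)"
  shows "ip \<Phi> (\<lambda>z. c z + d z) e = ip \<Phi> c e + ip \<Phi> d e"
proof -
  let ?S = "csupp c \<union> csupp d"
  have f: "finite ?S" using assms by auto
  show ?thesis
    using ip_ext[OF f csupp_add[of c d], of \<Phi> e] ip_ext[OF f, of c \<Phi> e] ip_ext[OF f, of d \<Phi> e]
    by (simp add: sum.distrib distrib_right)
qed

lemma ip_diff_left: assumes "finite (csupp c)" "finite (csupp d)"
  shows "ip \<Phi> (c - d) e = ip \<Phi> c e - ip \<Phi> d e"
proof -
  let ?S = "csupp c \<union> csupp d"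
  have f: "finite ?S" using assms by auto
  show ?thesis
    using ip_ext[OF f csupp_diff[of c d], of \<Phi> e] ip_ext[OF f, of c \<Phi> e] ip_ext[OF f, of d \<Phi> e]
    by (simp add: sum_subtractf left_diff_distrib)
qed

lemma ip_scale_left: assumes "finite (csupp c)"
  shows "ip \<Phi> (\<lambda>z. t * c z) e = t * ip \<Phi> c e"
  using ip_ext[OF assms csupp_scale[of t c], of \<Phi> e] ip_ext[OF assms, of c \<Phi> e]
  by (simp add: sum_distrib_left mult.assoc)

lemma ip_add_right: assumes "finite (csupp d)" "finite (csupp e)"
  shows "ip \<Phi> c (\<lambda>z. d z + e z) = ip \<Phi> c d + ip \<Phi> c e"
  unfolding ip_def using kfun_add[OF assms] by (simp add: sum.distrib distrib_left)

lemma ip_diff_right: assumes "finite (csupp d)" "finite (csupp e)"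
  shows "ip \<Phi> c (d - e) = ip \<Phi> c d - ip \<Phi> c e"
  unfolding ip_def using kfun_diff[OF assms] by (simp add: sum_subtractf right_diff_distrib)

lemma ip_scale_right: assumes "finite (csupp d)"
  shows "ip \<Phi> c (\<lambda>z. t * d z) = t * ip \<Phi> c d"
  unfolding ip_def using kfun_scale[OF assms] by (simp add: sum_distrib_left mult.assoc mult.left_commute)

lemma ip_sym:
  assumes sym: "\<forall>u\<in>\<Omega>. \<forall>v\<in>\<Omega>. \<Phi> (u - v) = \<Phi> (v - u)"
    and c: "fs_coeff \<Omega> c" and d: "fs_coeff \<Omega> d"
  shows "ip \<Phi> c d = ip \<Phi> d c"
proof -
  have fc: "finite (csupp c)" and fd: "finite (csupp d)" using c d by (auto simp: fs_coeff_def)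
  have "ip \<Phi> c d = (\<Sum>z\<in>csupp c. \<Sum>w\<in>csupp d. c z * d w * \<Phi> (z - w))"
    unfolding ip_def kfun_def by (simp add: sum_distrib_left mult.assoc)
  also have "\<dots> = (\<Sum>w\<in>csupp d. \<Sum>z\<in>csupp c. c z * d w * \<Phi> (z - w))"
    by (rule sum.swap)
  also have "\<dots> = (\<Sum>w\<in>csupp d. \<Sum>z\<in>csupp c. d w * c z * \<Phi> (w - z))"
  proof (intro sum.cong refl)
    fix w z assume "w \<in> csupp d" "z \<in> csupp c"
    then have "w \<in> \<Omega>" "z \<in> \<Omega>" using c d by (auto simp: fs_coeff_def)
    then show "c z * d w * \<Phi> (z - w) = d w * c z * \<Phi> (w - z)" using sym by simp
  qed
  also have "\<dots> = ip \<Phi> d c"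
    unfolding ip_def kfun_def by (simp add: sum_distrib_left mult.assoc)
  finally show ?thesis .
qed

lemma ip_nonneg:
  assumes pd: "pd_kernel_on \<Omega> \<Phi>" and c: "fs_coeff \<Omega> c"
  shows "ip \<Phi> c c \<ge> 0"
proof (cases "csupp c = {}")
  case True then show ?thesis by (simp add: ip_def)
next
  case False then show ?thesis using pd c unfolding pd_kernel_on_def knorm2_ip
    by (simp add: less_imp_le)
qed


lemma quad_disc:
  fixes A B C :: real
  assumes q: "\<And>t. 0 \<le> C + 2*t*B + t^2*A" and A: "A \<ge> 0"
  shows "B^2 \<le> A * C"
proof (cases "A = 0")
  case True
  have "B = 0"
  proof (rule ccontr)
    assume "B \<noteq> 0"
    have "0 \<le> C + 2*(-(C+1)/(2*B))*B + (-(C+1)/(2*B))^2*A" by (rule q)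
    also have "\<dots> = -1" using True \<open>B \<noteq> 0\<close> by (simp add: field_simps)
    finally show False by simp
  qed
  then show ?thesis using True by simp
next
  case False
  then have Ap: "A > 0" using A by simp
  have "0 \<le> C + 2*(-B/A)*B + (-B/A)^2*A" by (rule q)
  also have "\<dots> = C - B^2/A" using Ap by (simp add: field_simps power2_eq_square)
  finally have "B^2/A \<le> C" by simp
  then show ?thesis using Ap by (simp add: field_simps mult.commute)
qed

definition kcauchy :: "'a::real_vector set \<Rightarrow> ('a \<Rightarrow> real) \<Rightarrow> (nat \<Rightarrow> 'a \<Rightarrow> real) \<Rightarrow> bool" where
  "kcauchy \<Omega> \<Phi> s \<longleftrightarrow> (\<forall>k. fs_coeff \<Omega> (s k)) \<and>
     (\<forall>e>0. \<exists>N. \<forall>k\<ge>N. \<forall>m\<ge>N. knorm2 \<Phi> (s k - s m) < e)"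

context
  fixes \<Omega> :: "'a::real_vector set" and \<Phi> :: "'a \<Rightarrow> real"
  assumes sym: "\<forall>u\<in>\<Omega>. \<forall>v\<in>\<Omega>. \<Phi> (u - v) = \<Phi> (v - u)"
    and pd: "pd_kernel_on \<Omega> \<Phi>"
begin

lemma ip_expand:
  assumes c: "fs_coeff \<Omega> c" and d: "fs_coeff \<Omega> d"
  shows "ip \<Phi> (\<lambda>z. c z + t * d z) (\<lambda>z. c z + t * d z) = ip \<Phi> c c + 2*t*ip \<Phi> c d + t^2 * ip \<Phi> d d"
proof -
  have fc: "finite (csupp c)" and fd: "finite (csupp d)" using c d by (auto simp: fs_coeff_def)
  have fe: "finite (csupp (\<lambda>z. t * d z))" using fd csupp_scale[of t d] finite_subset by blast
  have "ip \<Phi> (\<lambda>z. c z + t * d z) (\<lambda>z. c z + t * d z)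
      = ip \<Phi> c (\<lambda>z. c z + t * d z) + ip \<Phi> (\<lambda>z. t * d z) (\<lambda>z. c z + t * d z)"
    using ip_add_left[OF fc fe] by simp
  also have "\<dots> = ip \<Phi> c c + t * ip \<Phi> c d + t * (ip \<Phi> d c + t * ip \<Phi> d d)"
    using ip_add_right[OF fc fe] ip_scale_left[OF fd] ip_scale_right[OF fd] by (simp add: ring_distribs)
  also have "\<dots> = ip \<Phi> c c + 2*t*ip \<Phi> c d + t^2 * ip \<Phi> d d"
    using ip_sym[OF sym c d] by (simp add: algebra_simps power2_eq_square)
  finally show ?thesis .
qed

lemma cs:
  assumes c: "fs_coeff \<Omega> c" and d: "fs_coeff \<Omega> d"
  shows "(ip \<Phi> c d)^2 \<le> ip \<Phi> c c * ip \<Phi> d d"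
proof -
  have "\<And>t. 0 \<le> ip \<Phi> c c + 2*t*ip \<Phi> c d + t^2 * ip \<Phi> d d"
    using ip_expand[OF c d] ip_nonneg[OF pd fs_add[OF c fs_scale[OF d]]] by metis
  from quad_disc[OF this ip_nonneg[OF pd d]] show ?thesis by (simp add: mult.commute)
qed

lemma cs_abs:
  assumes c: "fs_coeff \<Omega> c" and d: "fs_coeff \<Omega> d"
  shows "\<bar>ip \<Phi> c d\<bar> \<le> sqrt (ip \<Phi> c c) * sqrt (ip \<Phi> d d)"
proof -
  have "\<bar>ip \<Phi> c d\<bar> = sqrt ((ip \<Phi> c d)^2)" by simp
  also have "\<dots> \<le> sqrt (ip \<Phi> c c * ip \<Phi> d d)" using cs[OF c d] real_sqrt_le_mono by blast
  finally show ?thesis by (simp add: real_sqrt_mult)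
qed

lemma norm_triangle:
  assumes c: "fs_coeff \<Omega> c" and d: "fs_coeff \<Omega> d"
  shows "sqrt (ip \<Phi> (\<lambda>z. c z + d z) (\<lambda>z. c z + d z)) \<le> sqrt (ip \<Phi> c c) + sqrt (ip \<Phi> d d)"
proof -
  have e: "ip \<Phi> (\<lambda>z. c z + d z) (\<lambda>z. c z + d z) = ip \<Phi> c c + 2*ip \<Phi> c d + ip \<Phi> d d"
    using ip_expand[OF c d, of 1] by simp
  have cc: "ip \<Phi> c c \<ge> 0" and dd: "ip \<Phi> d d \<ge> 0" using ip_nonneg[OF pd] c d by auto
  have "ip \<Phi> c d \<le> sqrt (ip \<Phi> c c) * sqrt (ip \<Phi> d d)" using cs_abs[OF c d] by linarith
  then have "ip \<Phi> (\<lambda>z. c z + d z) (\<lambda>z. c z + d z) \<le> (sqrt (ip \<Phi> c c) + sqrt (ip \<Phi> d d))^2"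
    using e cc dd by (simp add: power2_sum)
  then show ?thesis
    by (metis add_nonneg_nonneg real_sqrt_ge_zero real_sqrt_le_mono real_sqrt_pow2_iff real_sqrt_unique cc dd)
qed

lemma norm_diff:
  assumes a: "fs_coeff \<Omega> a" and b: "fs_coeff \<Omega> b"
  shows "\<bar>sqrt (knorm2 \<Phi> a) - sqrt (knorm2 \<Phi> b)\<bar> \<le> sqrt (knorm2 \<Phi> (a - b))"
proof -
  have ab: "fs_coeff \<Omega> (a - b)" and ba: "fs_coeff \<Omega> (b - a)" using fs_diff a b by auto
  have 1: "sqrt (knorm2 \<Phi> a) \<le> sqrt (knorm2 \<Phi> b) + sqrt (knorm2 \<Phi> (a - b))"
    using norm_triangle[OF b ab] by (simp add: knorm2_ip)
  have 2: "sqrt (knorm2 \<Phi> b) \<le> sqrt (knorm2 \<Phi> a) + sqrt (knorm2 \<Phi> (b - a))"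
    using norm_triangle[OF a ba] by (simp add: knorm2_ip)
  have eq: "knorm2 \<Phi> (b - a) = knorm2 \<Phi> (a - b)"
  proof -
    have "b - a = (\<lambda>z. (a - b) z + (-2) * (a - b) z)" by (simp add: fun_eq_iff)
    hence "knorm2 \<Phi> (b - a) = ip \<Phi> (\<lambda>z. (a - b) z + (-2) * (a - b) z) (\<lambda>z. (a - b) z + (-2) * (a - b) z)"
      by (simp add: knorm2_ip)
    also have "\<dots> = knorm2 \<Phi> (a - b)" using ip_expand[OF ab ab, of "-2"] by (simp add: knorm2_ip)
    finally show ?thesis .
  qed
  show ?thesis using 1 2[unfolded eq] by linarith
qed


lemma kcauchy_conv:
  assumes s: "kcauchy \<Omega> \<Phi> s"
  shows "convergent (\<lambda>k. sqrt (knorm2 \<Phi> (s k)))"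
proof -
  have "Cauchy (\<lambda>k. sqrt (knorm2 \<Phi> (s k)))"
  proof (rule metric_CauchyI)
    fix e :: real assume e: "e > 0"
    then obtain N where N: "\<forall>k\<ge>N. \<forall>m\<ge>N. knorm2 \<Phi> (s k - s m) < e^2"
      using s unfolding kcauchy_def by (meson zero_less_power)
    show "\<exists>M. \<forall>m\<ge>M. \<forall>n\<ge>M. dist (sqrt (knorm2 \<Phi> (s m))) (sqrt (knorm2 \<Phi> (s n))) < e"
    proof (intro exI allI impI)
      fix m n assume "m \<ge> N" "n \<ge> N"
      then have "knorm2 \<Phi> (s m - s n) < e^2" using N by blast
      then have "sqrt (knorm2 \<Phi> (s m - s n)) < e"
        using e by (metis abs_of_pos real_sqrt_abs real_sqrt_less_mono)
      moreover have "\<bar>sqrt (knorm2 \<Phi> (s m)) - sqrt (knorm2 \<Phi> (s n))\<bar> \<le> sqrt (knorm2 \<Phi> (s m - s n))"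
        using norm_diff s unfolding kcauchy_def by blast
      ultimately show "dist (sqrt (knorm2 \<Phi> (s m))) (sqrt (knorm2 \<Phi> (s n))) < e"
        by (simp add: dist_real_def)
    qed
  qed
  then show ?thesis by (simp add: Cauchy_convergent_iff)
qed

lemma kcauchy_zero:
  assumes d: "kcauchy \<Omega> \<Phi> d" and pw: "\<forall>z\<in>\<Omega>. (\<lambda>k. kfun \<Phi> (d k) z) \<longlonglongrightarrow> 0"
  shows "(\<lambda>k. knorm2 \<Phi> (d k)) \<longlonglongrightarrow> 0"
proof -
  have fs: "\<And>k. fs_coeff \<Omega> (d k)" using d by (simp add: kcauchy_def)
  obtain Mb where Mb: "Mb > 0" "\<And>k. norm (sqrt (knorm2 \<Phi> (d k))) \<le> Mb"
    using convergent_imp_Bseq[OF kcauchy_conv[OF d]] by (auto elim: BseqE)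
  show ?thesis
  proof (rule LIMSEQ_I)
    fix r :: real assume r: "r > 0"
    then have "(r/(2*Mb))^2 > 0" using Mb by simp
    then obtain N where N: "\<forall>k\<ge>N. \<forall>m\<ge>N. knorm2 \<Phi> (d k - d m) < (r/(2*Mb))^2"
      using d unfolding kcauchy_def by blast
    have "(\<lambda>k. ip \<Phi> (d N) (d k)) \<longlonglongrightarrow> (\<Sum>z\<in>csupp (d N). d N z * 0)"
      unfolding ip_def
    proof (intro tendsto_sum tendsto_mult tendsto_const)
      fix z assume "z \<in> csupp (d N)"
      then have "z \<in> \<Omega>" using fs[of N] by (auto simp: fs_coeff_def)
      then show "(\<lambda>k. kfun \<Phi> (d k) z) \<longlonglongrightarrow> 0" using pw by blast
    qed
    then have "(\<lambda>k. ip \<Phi> (d N) (d k)) \<longlonglongrightarrow> 0" by simp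
    from LIMSEQ_D[OF this, of "r/2"] r obtain no where
      no: "\<forall>k\<ge>no. \<bar>ip \<Phi> (d N) (d k)\<bar> < r/2" by auto
    show "\<exists>no. \<forall>k\<ge>no. norm (knorm2 \<Phi> (d k) - 0) < r"
    proof (intro exI allI impI)
      fix k assume k: "k \<ge> max N no"
      have fk: "finite (csupp (d k))" and fN: "finite (csupp (d N))" using fs by (auto simp: fs_coeff_def)
      have dec: "knorm2 \<Phi> (d k) = ip \<Phi> (d k - d N) (d k) + ip \<Phi> (d N) (d k)"
        using ip_diff_left[OF fk fN] by (simp add: knorm2_ip)
      have s1: "sqrt (knorm2 \<Phi> (d k - d N)) < r/(2*Mb)"
        using N k r Mb by (metis max.bounded_iff order_refl real_sqrt_less_mono real_sqrt_abs abs_of_pos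
            divide_pos_pos mult_pos_pos zero_less_numeral)
      have s2: "sqrt (knorm2 \<Phi> (d k)) \<le> Mb" using Mb(2)[of k] by simp
      have "\<bar>ip \<Phi> (d k - d N) (d k)\<bar> \<le> sqrt (knorm2 \<Phi> (d k - d N)) * sqrt (knorm2 \<Phi> (d k))"
        using cs_abs[OF fs_diff[OF fs fs] fs] by (simp add: knorm2_ip)
      also have "\<dots> \<le> (r/(2*Mb)) * Mb"
        using s1 s2 r Mb(1) ip_nonneg[OF pd fs[of k]] by (intro mult_mono) (auto simp: knorm2_ip)
      also have "\<dots> = r/2" using Mb by simp
      finally have "\<bar>ip \<Phi> (d k - d N) (d k)\<bar> \<le> r/2" .
      moreover have "\<bar>ip \<Phi> (d N) (d k)\<bar> < r/2" using no k by auto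
      ultimately show "norm (knorm2 \<Phi> (d k) - 0) < r" using dec by simp
    qed
  qed
qed


context
  fixes x :: "'n::finite \<Rightarrow> 'a" and lam :: real
  assumes inj: "inj x" and inO: "range x \<subseteq> \<Omega>" and lam: "lam > 0"
begin

definition cf :: "real^'n \<Rightarrow> 'a \<Rightarrow> real" where
  "cf v = (\<lambda>w. if w \<in> range x then v $ (inv x w) else 0)"

definition KM :: "real^'n^'n" where "KM = (\<chi> i j. \<Phi> (x i - x j))"
definition MM :: "real^'n^'n" where "MM = KM + (real CARD('n) * lam) *\<^sub>R mat 1"

lemma cf_supp: "csupp (cf v) \<subseteq> range x"
  by (auto simp: csupp_def cf_def)

lemma cf_fs: "fs_coeff \<Omega> (cf v)"
  using cf_supp[of v] inO finite_subset[OF cf_supp[of v]] unfolding fs_coeff_def by auto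

lemma cf_at: "cf v (x i) = v $ i"
  using inj by (simp add: cf_def)

lemma sum_range: "(\<Sum>w\<in>range x. f w) = (\<Sum>i\<in>UNIV. f (x i))"
  using sum.reindex[of x UNIV f] inj by simp

lemma kfun_cf: "kfun \<Phi> (cf v) u = (\<Sum>i\<in>UNIV. v $ i * \<Phi> (u - x i))"
  using kfun_ext[of "range x" "cf v" \<Phi> u] cf_supp[of v] by (simp add: sum_range cf_at)

lemma ip_cf: "ip \<Phi> (cf v) e = (\<Sum>i\<in>UNIV. v $ i * kfun \<Phi> e (x i))"
  using ip_ext[of "range x" "cf v" \<Phi> e] cf_supp[of v] by (simp add: sum_range cf_at)

lemma kfun_cf_KM: "kfun \<Phi> (cf v) (x j) = (KM *v v) $ j"
  unfolding kfun_cf KM_def by (simp add: matrix_vector_mult_def mult.commute)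

lemma MM_mult: "MM *v v = KM *v v + (real CARD('n) * lam) *\<^sub>R v"
  unfolding MM_def matrix_vector_mult_add_rdistrib
  by (metis matrix_vector_mul_lid scaleR_matrix_vector_assoc)

lemma KM_psd: "v \<bullet> (KM *v v) \<ge> 0"
proof -
  have "v \<bullet> (KM *v v) = ip \<Phi> (cf v) (cf v)"
    unfolding ip_cf inner_vec_def by (simp add: kfun_cf_KM)
  then show ?thesis using ip_nonneg[OF pd cf_fs] by simp
qed

lemma MM_invertible: "invertible MM"
proof -
  have "inj ((*v) MM)"
    unfolding linear_injective_0[OF matrix_vector_mul_linear]
  proof (intro allI impI)
    fix v :: "real^'n" assume "MM *v v = 0"
    then have "0 = v \<bullet> (MM *v v)" by simp
    also have "\<dots> = v \<bullet> (KM *v v) + (real CARD('n) * lam) * (v \<bullet> v)"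
      by (simp add: MM_mult inner_add_right)
    finally have "(real CARD('n) * lam) * (v \<bullet> v) \<le> 0" using KM_psd[of v] by linarith
    moreover have "real CARD('n) * lam > 0" using lam by simp
    ultimately have "v \<bullet> v \<le> 0" using lam by (simp add: mult_le_0_iff)
    then show "v = 0" by (meson inner_ge_zero inner_eq_zero_iff order_antisym)
  qed
  then show ?thesis
    using invertible_det_nz[of MM] det_nz_iff_inj[OF matrix_vector_mul_linear, of MM] by simp
qed

lemma MM_inv_mult: "MM *v (matrix_inv MM *v w) = w"
proof -
  have "MM ** matrix_inv MM = mat 1"
    using MM_invertible unfolding invertible_def matrix_inv_def by (rule someI2_ex) auto
  then show ?thesis by (simp add: matrix_vector_mul_assoc)
qed


definition objc :: "('n \<Rightarrow> real) \<Rightarrow> ('a \<Rightarrow> real) \<Rightarrow> real" where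
  "objc z c = (1 / real CARD('n)) * (\<Sum>i\<in>UNIV. (z i - kfun \<Phi> c (x i))^2) + lam * knorm2 \<Phi> c"

definition alpha :: "('n \<Rightarrow> real) \<Rightarrow> real^'n" where
  "alpha z = matrix_inv MM *v (\<chi> i. z i)"

lemma resid: "z i - kfun \<Phi> (cf (alpha z)) (x i) = real CARD('n) * lam * alpha z $ i"
proof -
  have "MM *v alpha z = (\<chi> i. z i)" unfolding alpha_def by (rule MM_inv_mult)
  then have "(MM *v alpha z) $ i = z i" by simp
  then show ?thesis unfolding MM_mult kfun_cf_KM by simp
qed

lemma objc_val: "objc z (cf (alpha z)) = lam * ((\<chi> i. z i) \<bullet> alpha z)"
proof -
  let ?n = "real CARD('n)" and ?a = "alpha z"
  have n: "?n > 0" by simp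
  have N: "knorm2 \<Phi> (cf ?a) = (\<Sum>i\<in>UNIV. ?a $ i * z i) - ?n * lam * (\<Sum>i\<in>UNIV. (?a $ i)^2)"
  proof -
    have "knorm2 \<Phi> (cf ?a) = (\<Sum>i\<in>UNIV. ?a $ i * kfun \<Phi> (cf ?a) (x i))"
      by (simp add: knorm2_ip ip_cf)
    also have "\<dots> = (\<Sum>i\<in>UNIV. ?a $ i * z i - ?n * lam * (?a $ i)^2)"
    proof (intro sum.cong refl)
      fix i
      have kf: "kfun \<Phi> (cf ?a) (x i) = z i - ?n * lam * ?a $ i" using resid[of z i] by simp
      show "?a $ i * kfun \<Phi> (cf ?a) (x i) = ?a $ i * z i - ?n * lam * (?a $ i)^2"
        unfolding kf by (simp add: algebra_simps power2_eq_square)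
    qed
    also have "\<dots> = (\<Sum>i\<in>UNIV. ?a $ i * z i) - ?n * lam * (\<Sum>i\<in>UNIV. (?a $ i)^2)"
      by (simp add: sum_subtractf sum_distrib_left)
    finally show ?thesis .
  qed
  have S: "(\<Sum>i\<in>UNIV. (z i - kfun \<Phi> (cf ?a) (x i))^2) = ?n^2 * lam^2 * (\<Sum>i\<in>UNIV. (?a $ i)^2)"
    by (simp add: resid sum_distrib_left power_mult_distrib)
  have "objc z (cf ?a) = (1/?n) * (?n^2 * lam^2 * (\<Sum>i\<in>UNIV. (?a $ i)^2))
      + lam * ((\<Sum>i\<in>UNIV. ?a $ i * z i) - ?n * lam * (\<Sum>i\<in>UNIV. (?a $ i)^2))"
    unfolding objc_def S N ..
  also have "\<dots> = lam * (\<Sum>i\<in>UNIV. ?a $ i * z i)"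
    using n by (simp add: field_simps power2_eq_square)
  also have "\<dots> = lam * ((\<chi> i. z i) \<bullet> ?a)"
    by (simp add: inner_vec_def mult.commute)
  finally show ?thesis .
qed

lemma objc_min:
  assumes c: "fs_coeff \<Omega> c"
  shows "objc z (cf (alpha z)) \<le> objc z c"
proof -
  let ?n = "real CARD('n)" and ?a = "alpha z"
  define d where "d = c - cf ?a"
  have d: "fs_coeff \<Omega> d" unfolding d_def by (rule fs_diff[OF c cf_fs])
  have fc: "finite (csupp c)" and fa: "finite (csupp (cf ?a))" and fd: "finite (csupp d)"
    using c cf_fs d by (auto simp: fs_coeff_def)
  have n: "?n > 0" by simp
  have ceq: "c = (\<lambda>w. cf ?a w + 1 * d w)" unfolding d_def by (simp add: fun_eq_iff)
  have kc: "kfun \<Phi> c (x i) = kfun \<Phi> (cf ?a) (x i) + kfun \<Phi> d (x i)" for i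
    unfolding d_def kfun_diff[OF fc fa] by simp
  have Nc: "knorm2 \<Phi> c = knorm2 \<Phi> (cf ?a) + 2 * (\<Sum>i\<in>UNIV. ?a $ i * kfun \<Phi> d (x i)) + knorm2 \<Phi> d"
    using ip_expand[OF cf_fs[of ?a] d, of 1] ceq by (simp add: knorm2_ip ip_cf)
  let ?k = "\<lambda>i. kfun \<Phi> d (x i)"
  have sq: "(\<Sum>i\<in>UNIV. (z i - kfun \<Phi> c (x i))^2)
      = (\<Sum>i\<in>UNIV. (z i - kfun \<Phi> (cf ?a) (x i))^2) - 2 * ?n * lam * (\<Sum>i\<in>UNIV. ?a $ i * ?k i)
        + (\<Sum>i\<in>UNIV. (?k i)^2)"
  proof -
    have "(\<Sum>i\<in>UNIV. (z i - kfun \<Phi> c (x i))^2)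
        = (\<Sum>i\<in>UNIV. (z i - kfun \<Phi> (cf ?a) (x i))^2 - 2 * ?n * lam * (?a $ i * ?k i) + (?k i)^2)"
    proof (intro sum.cong refl)
      fix i
      show "(z i - kfun \<Phi> c (x i))^2
          = (z i - kfun \<Phi> (cf ?a) (x i))^2 - 2 * ?n * lam * (?a $ i * ?k i) + (?k i)^2"
        unfolding kc using resid[of z i] by (simp add: algebra_simps power2_eq_square)
    qed
    also have "\<dots> = (\<Sum>i\<in>UNIV. (z i - kfun \<Phi> (cf ?a) (x i))^2) - 2 * ?n * lam * (\<Sum>i\<in>UNIV. ?a $ i * ?k i)
        + (\<Sum>i\<in>UNIV. (?k i)^2)"
      by (simp add: sum.distrib sum_subtractf sum_distrib_left)
    finally show ?thesis .
  qed
  have "objc z c = objc z (cf ?a) + (1/?n) * (\<Sum>i\<in>UNIV. (?k i)^2) + lam * knorm2 \<Phi> d"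
    unfolding objc_def sq Nc using n by (simp add: field_simps)
  moreover have "(\<Sum>i\<in>UNIV. (?k i)^2) \<ge> 0" by (simp add: sum_nonneg)
  moreover have "knorm2 \<Phi> d \<ge> 0" using ip_nonneg[OF pd d] by (simp add: knorm2_ip)
  ultimately show ?thesis using n lam by (simp add: add_nonneg_nonneg)
qed


lemma native_norm_ex:
  assumes "f \<in> native_space \<Omega> \<Phi>"
  shows "\<exists>s. native_approx \<Omega> \<Phi> f s \<and> (\<lambda>k. sqrt (knorm2 \<Phi> (s k))) \<longlonglongrightarrow> native_norm \<Omega> \<Phi> f"
proof -
  obtain s where s: "native_approx \<Omega> \<Phi> f s" using assms by (auto simp: native_space_def)
  then have "kcauchy \<Omega> \<Phi> s" by (simp add: native_approx_def kcauchy_def)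
  then obtain r where "(\<lambda>k. sqrt (knorm2 \<Phi> (s k))) \<longlonglongrightarrow> r"
    using kcauchy_conv by (auto simp: convergent_def)
  then have "\<exists>r s. native_approx \<Omega> \<Phi> f s \<and> (\<lambda>k. sqrt (knorm2 \<Phi> (s k))) \<longlonglongrightarrow> r"
    using s by blast
  then show ?thesis unfolding native_norm_def by (rule someI_ex)
qed

lemma native_lower:
  assumes h: "h \<in> native_space \<Omega> \<Phi>"
  shows "objc z (cf (alpha z)) \<le> reg_obj \<Omega> \<Phi> x lam z h"
proof -
  obtain s where s: "native_approx \<Omega> \<Phi> h s"
    and sn: "(\<lambda>k. sqrt (knorm2 \<Phi> (s k))) \<longlonglongrightarrow> native_norm \<Omega> \<Phi> h"
    using native_norm_ex[OF h] by blast
  have fs: "\<And>k. fs_coeff \<Omega> (s k)" using s by (simp add: native_approx_def)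
  have pw: "\<And>u. u \<in> \<Omega> \<Longrightarrow> (\<lambda>k. kfun \<Phi> (s k) u) \<longlonglongrightarrow> h u" using s by (simp add: native_approx_def)
  have eq: "objc z (s k) = (1 / real CARD('n)) * (\<Sum>i\<in>UNIV. (z i - kfun \<Phi> (s k) (x i))^2)
      + lam * (sqrt (knorm2 \<Phi> (s k)))^2" for k
    using ip_nonneg[OF pd fs[of k]] by (simp add: objc_def knorm2_ip)
  have "(\<lambda>k. objc z (s k)) \<longlonglongrightarrow> reg_obj \<Omega> \<Phi> x lam z h"
    unfolding eq reg_obj_def
    using inO by (intro tendsto_intros sn pw) auto
  moreover have "\<forall>k. objc z (cf (alpha z)) \<le> objc z (s k)" using objc_min fs by blast
  ultimately show ?thesis by (intro LIMSEQ_le_const) auto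
qed

lemma native_star:
  "kfun \<Phi> (cf (alpha z)) \<in> native_space \<Omega> \<Phi> \<and>
   reg_obj \<Omega> \<Phi> x lam z (kfun \<Phi> (cf (alpha z))) = objc z (cf (alpha z))"
proof -
  let ?c = "cf (alpha z)"
  let ?g = "kfun \<Phi> ?c"
  have fa: "finite (csupp ?c)" using cf_fs by (auto simp: fs_coeff_def)
  have "native_approx \<Omega> \<Phi> ?g (\<lambda>k. ?c)"
    unfolding native_approx_def using cf_fs by (auto simp: knorm2_def csupp_def)
  then have gin: "?g \<in> native_space \<Omega> \<Phi>" by (auto simp: native_space_def)
  obtain s where s: "native_approx \<Omega> \<Phi> ?g s"
    and sn: "(\<lambda>k. sqrt (knorm2 \<Phi> (s k))) \<longlonglongrightarrow> native_norm \<Omega> \<Phi> ?g"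
    using native_norm_ex[OF gin] by blast
  have fs: "\<And>k. fs_coeff \<Omega> (s k)" using s by (simp add: native_approx_def)
  then have fsk: "\<And>k. finite (csupp (s k))" by (simp add: fs_coeff_def)
  define d where "d k = s k - ?c" for k
  have fd: "\<And>k. fs_coeff \<Omega> (d k)" unfolding d_def using fs_diff[OF fs cf_fs] by blast
  have "kcauchy \<Omega> \<Phi> d"
  proof -
    have "d k - d m = s k - s m" for k m unfolding d_def by (simp add: fun_eq_iff)
    then show ?thesis using s fd unfolding kcauchy_def native_approx_def by simp
  qed
  moreover have pwd: "\<forall>u\<in>\<Omega>. (\<lambda>k. kfun \<Phi> (d k) u) \<longlonglongrightarrow> 0"
  proof
    fix u assume u: "u \<in> \<Omega>"
    have "(\<lambda>k. kfun \<Phi> (s k) u - ?g u) \<longlonglongrightarrow> ?g u - ?g u"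
      using s u unfolding native_approx_def by (intro tendsto_intros) auto
    then show "(\<lambda>k. kfun \<Phi> (d k) u) \<longlonglongrightarrow> 0"
      unfolding d_def kfun_diff[OF fsk fa] by simp
  qed
  ultimately have d0: "(\<lambda>k. knorm2 \<Phi> (d k)) \<longlonglongrightarrow> 0" by (rule kcauchy_zero)
  have ipd: "(\<lambda>k. (\<Sum>i\<in>UNIV. alpha z $ i * kfun \<Phi> (d k) (x i))) \<longlonglongrightarrow> (\<Sum>i\<in>UNIV. alpha z $ i * 0)"
    using pwd inO by (intro tendsto_intros) auto
  have Ns: "knorm2 \<Phi> (s k) = knorm2 \<Phi> ?c + 2 * (\<Sum>i\<in>UNIV. alpha z $ i * kfun \<Phi> (d k) (x i)) + knorm2 \<Phi> (d k)" for k
  proof -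
    have "s k = (\<lambda>w. ?c w + 1 * d k w)" unfolding d_def by (simp add: fun_eq_iff)
    then show ?thesis using ip_expand[OF cf_fs[of "alpha z"] fd[of k], of 1] by (simp add: knorm2_ip ip_cf)
  qed
  have "(\<lambda>k. knorm2 \<Phi> (s k)) \<longlonglongrightarrow> knorm2 \<Phi> ?c + 2 * (\<Sum>i\<in>UNIV. alpha z $ i * 0) + 0"
    unfolding Ns by (intro tendsto_intros ipd d0)
  then have l1: "(\<lambda>k. knorm2 \<Phi> (s k)) \<longlonglongrightarrow> knorm2 \<Phi> ?c" by simp
  have "(\<lambda>k. (sqrt (knorm2 \<Phi> (s k)))^2) \<longlonglongrightarrow> (native_norm \<Omega> \<Phi> ?g)^2"
    by (intro tendsto_intros sn)
  moreover have "(\<lambda>k. (sqrt (knorm2 \<Phi> (s k)))^2) = (\<lambda>k. knorm2 \<Phi> (s k))"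
    using ip_nonneg[OF pd fs] by (simp add: knorm2_ip)
  ultimately have "(native_norm \<Omega> \<Phi> ?g)^2 = knorm2 \<Phi> ?c" using l1 LIMSEQ_unique by metis
  then show ?thesis using gin by (simp add: reg_obj_def objc_def)
qed

lemma reg_val:
  "reg_obj \<Omega> \<Phi> x lam z (reg_min \<Omega> \<Phi> x lam z) = lam * ((\<chi> i. z i) \<bullet> alpha z)"
proof -
  let ?P = "\<lambda>g. g \<in> native_space \<Omega> \<Phi> \<and>
        (\<forall>h\<in>native_space \<Omega> \<Phi>. reg_obj \<Omega> \<Phi> x lam z g \<le> reg_obj \<Omega> \<Phi> x lam z h)"
  have "?P (kfun \<Phi> (cf (alpha z)))" using native_star native_lower by simp
  then have P: "?P (reg_min \<Omega> \<Phi> x lam z)" unfolding reg_min_def by (rule someI[of ?P])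
  have "reg_obj \<Omega> \<Phi> x lam z (reg_min \<Omega> \<Phi> x lam z) \<le> objc z (cf (alpha z))"
    using P native_star by metis
  moreover have "objc z (cf (alpha z)) \<le> reg_obj \<Omega> \<Phi> x lam z (reg_min \<Omega> \<Phi> x lam z)"
    using P native_lower by blast
  ultimately show ?thesis using objc_val by simp
qed

lemma reg_val_global:
  "reg_obj \<Omega> \<Phi> x lam z (reg_min \<Omega> \<Phi> x lam z) = lam * ((\<chi> i. z i) \<bullet>
     (matrix_inv ((\<chi> i j. \<Phi> (x i - x j)) + (real CARD('n) * lam) *\<^sub>R mat 1) *v (\<chi> i. z i)))"
  using reg_val unfolding alpha_def MM_def KM_def .

end

end

theorem theorem3p1:
  fixes \<Omega> :: "'a::euclidean_space set" and \<Phi> :: "'a \<Rightarrow> real"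
    and x :: "'n::finite \<Rightarrow> 'a" and y :: "'n \<Rightarrow> real" and lam :: real
    and \<Theta> :: "'b set" and ys :: "'a \<Rightarrow> 'b \<Rightarrow> real"
  assumes sym: "\<forall>u\<in>\<Omega>. \<forall>v\<in>\<Omega>. \<Phi> (u - v) = \<Phi> (v - u)"
    and pd: "pd_kernel_on \<Omega> \<Phi>"
    and distinct: "inj x"
    and inO: "range x \<subseteq> \<Omega>"
    and lam: "lam > 0"
  shows "argmins_on \<Theta>
           (\<lambda>\<theta>. (\<chi> i. y i - ys (x i) \<theta>) \<bullet>
                 (matrix_inv ((\<chi> i j. \<Phi> (x i - x j)) + (real CARD('n) * lam) *\<^sub>R mat 1)
                    *v (\<chi> i. y i - ys (x i) \<theta>)))
       = argmins_on \<Theta>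
           (\<lambda>\<theta>. reg_obj \<Omega> \<Phi> x lam (\<lambda>i. y i - ys (x i) \<theta>)
                   (reg_min \<Omega> \<Phi> x lam (\<lambda>i. y i - ys (x i) \<theta>)))"
proof -
  have sc: "argmins_on \<Theta> (\<lambda>t. lam * F t) = argmins_on \<Theta> F" for F :: "'b \<Rightarrow> real"
    unfolding argmins_on_def using lam by simp
  have "\<And>\<theta>. reg_obj \<Omega> \<Phi> x lam (\<lambda>i. y i - ys (x i) \<theta>) (reg_min \<Omega> \<Phi> x lam (\<lambda>i. y i - ys (x i) \<theta>))
     = lam * ((\<chi> i. y i - ys (x i) \<theta>) \<bullet>
                 (matrix_inv ((\<chi> i j. \<Phi> (x i - x j)) + (real CARD('n) * lam) *\<^sub>R mat 1)
                    *v (\<chi> i. y i - ys (x i) \<theta>)))"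
    using reg_val_global[OF sym pd distinct inO lam] by simp
  then show ?thesis by (simp add: sc)
qed

end
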